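(* There is an absolute constant $C>0$ such that for every $n\in\mathbb N$, all points $z_1,\dots,z_n\in\mathbb T$ and all $\alpha_1,\dots,\alpha_n>0$, the measure $\nu=\sum_{k=1}^n\alpha_k\delta_{z_k}$ satisfies $$\|\mathcal C\nu\|_{L^1(\mathbb D)}\ \ge\ C\,\frac{\sum_{k=1}^n\alpha_k^2}{\|\nu\|},$$ where $\|\nu\|=\sum_{k=1}^n\alpha_k$ is the total variation of $\nu$.
   Context: $\mathbb D$ is the open unit disc in $\mathbb C$, $\mathbb T=\partial\mathbb D$ the unit circle, and $L^1(\mathbb D)$ is taken with respect to planar Lebesgue measure $m$. For a measure $\mu$ on $\overline{\mathbb D}$, its Cauchy transform is $\mathcal C\mu(z)=\int\frac{d\mu(\xi)}{\xi-z}$ for $|z|<1$; thus $\mathcal C\nu(z)=\sum_{k=1}^n\frac{\alpha_k}{z_k-z}$. $\delta_{z}$ denotes the Dirac measure at $z$. *)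

theory Defs
  imports "HOL-Analysis.Analysis"
begin

definition cauchy_transform_discrete ::
  "nat \<Rightarrow> (nat \<Rightarrow> complex) \<Rightarrow> (nat \<Rightarrow> real) \<Rightarrow> complex \<Rightarrow> complex" where
  "cauchy_transform_discrete n z \<alpha> w = (\<Sum>k<n. complex_of_real (\<alpha> k) / (z k - w))"

definition L1_norm_disc :: "(complex \<Rightarrow> complex) \<Rightarrow> ennreal" where
  "L1_norm_disc f = (\<integral>\<^sup>+ w \<in> ball 0 1. ennreal (norm (f w)) \<partial>lborel)"

end

theory Submission
  imports Defs
begin

lemma re_inv_one_minus:
  fixes u :: complex
  assumes "u \<noteq> 1"
  shows "Re (1 / (1 - u)) = (1 - Re u) / (norm (1 - u))\<^sup>2"
  by (simp add: Re_divide cmod_power2)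

lemma g_nonneg:
  fixes z w :: complex
  assumes "norm z = 1" "norm w < 1"
  shows "0 \<le> Re (z / (z - w))"
proof -
  have zw: "z \<noteq> w" using assms by auto
  have z0: "z \<noteq> 0" using assms by auto
  have eq: "z / (z - w) = 1 / (1 - w / z)" using zw z0 by (simp add: field_simps)
  have "norm (w / z) < 1" using assms by (simp add: norm_divide)
  hence u1: "w / z \<noteq> 1" by auto
  have "Re (w / z) \<le> norm (w / z)" by (rule complex_Re_le_cmod)
  with \<open>norm (w / z) < 1\<close> have "0 \<le> 1 - Re (w / z)" by linarith
  thus ?thesis unfolding eq re_inv_one_minus[OF u1] by simp
qed

lemma g_big:
  fixes z w :: complex and r :: real
  assumes "norm z = 1" "0 < r" "r \<le> 1/2" "dist (complex_of_real (1 - 2*r) * z) w < r"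
  shows "1 / (9 * r) \<le> Re (z / (z - w))"
proof -
  define c where "c = complex_of_real (1 - 2*r) * z"
  have z0: "z \<noteq> 0" using assms by auto
  have wc: "norm (w - c) < r" using assms(4) by (simp add: c_def dist_norm norm_minus_commute)
  have zc: "norm (z - c) = 2 * r"
  proof -
    have "z - c = complex_of_real (2*r) * z" by (simp add: c_def algebra_simps)
    thus ?thesis using assms by (simp add: norm_mult)
  qed
  have zw_le: "norm (z - w) < 3 * r"
  proof -
    have "norm (z - w) \<le> norm (z - c) + norm (c - w)"
      using norm_triangle_ineq[of "z - c" "c - w"] by simp
    thus ?thesis using zc wc by (simp add: norm_minus_commute)
  qed
  have u_eq: "w / z = complex_of_real (1 - 2*r) + (w - c) / z"
  proof -
    have "w / z = c / z + (w - c) / z" by (simp add: diff_divide_distrib)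
    moreover have "c / z = complex_of_real (1 - 2*r)" using z0 by (simp add: c_def)
    ultimately show ?thesis by simp
  qed
  have "Re ((w - c) / z) \<le> norm ((w - c) / z)" by (rule complex_Re_le_cmod)
  also have "\<dots> = norm (w - c)" using assms by (simp add: norm_divide)
  finally have "Re (w / z) < 1 - r" using wc u_eq by simp
  hence u1: "w / z \<noteq> 1" using assms(2) by auto
  hence zw: "z \<noteq> w" using z0 by auto
  have eq: "z / (z - w) = 1 / (1 - w / z)" using zw z0 by (simp add: field_simps)
  have n1: "norm (1 - w / z) = norm (z - w)"
  proof -
    have "1 - w / z = (z - w) / z" using z0 by (simp add: field_simps)
    thus ?thesis using assms by (simp add: norm_divide)
  qed
  have pos: "0 < norm (z - w)" using zw by simp
  have sq: "(norm (z - w))\<^sup>2 \<le> 9 * r^2"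
  proof -
    have "(norm (z - w))\<^sup>2 \<le> (3*r)\<^sup>2" using zw_le pos by (intro power_mono) auto
    thus ?thesis by (simp add: power_mult_distrib)
  qed
  have "1 / (9 * r) = r / (9 * r^2)" using assms by (simp add: power2_eq_square)
  also have "\<dots> \<le> (1 - Re (w / z)) / (9 * r^2)"
    using \<open>Re (w / z) < 1 - r\<close> assms by (intro divide_right_mono) auto
  also have "\<dots> \<le> (1 - Re (w / z)) / (norm (z - w))\<^sup>2"
    using sq pos \<open>Re (w / z) < 1 - r\<close> assms by (intro divide_left_mono) auto
  finally show ?thesis unfolding eq re_inv_one_minus[OF u1] n1 .
qed


lemma re_lin: "Re (complex_of_real a * (q - 1)) = a * Re q - a"
  by (simp add: algebra_simps)

lemma key_ineq:
  fixes z :: "nat \<Rightarrow> complex" and \<alpha> :: "nat \<Rightarrow> real" and w :: complex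
  assumes z: "\<forall>k<n. norm (z k) = 1" and w: "norm w < 1"
  shows "(\<Sum>k<n. \<alpha> k * Re (z k / (z k - w)))
     \<le> norm (cauchy_transform_discrete n z \<alpha> w) + (\<Sum>k<n. \<alpha> k)"
proof -
  define f where "f = cauchy_transform_discrete n z \<alpha> w"
  have zw: "\<And>k. k < n \<Longrightarrow> z k \<noteq> w" using z w by auto
  have "w * f = (\<Sum>k<n. complex_of_real (\<alpha> k) * (z k / (z k - w) - 1))"
    unfolding f_def cauchy_transform_discrete_def sum_distrib_left
  proof (rule sum.cong)
    fix k assume "k \<in> {..<n}"
    hence "z k - w \<noteq> 0" using zw by auto
    thus "w * (complex_of_real (\<alpha> k) / (z k - w)) =
        complex_of_real (\<alpha> k) * (z k / (z k - w) - 1)"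
      by (simp add: field_simps)
  qed simp
  hence "Re (w * f) = (\<Sum>k<n. Re (complex_of_real (\<alpha> k) * (z k / (z k - w) - 1)))"
    by (simp only: Re_sum)
  also have "\<dots> = (\<Sum>k<n. \<alpha> k * Re (z k / (z k - w)) - \<alpha> k)"
    by (intro sum.cong refl re_lin)
  finally have "Re (w * f) = (\<Sum>k<n. \<alpha> k * Re (z k / (z k - w))) - (\<Sum>k<n. \<alpha> k)"
    by (simp add: sum_subtractf)
  moreover have "Re (w * f) \<le> norm f"
  proof -
    have "Re (w * f) \<le> norm (w * f)" by (rule complex_Re_le_cmod)
    also have "\<dots> = norm w * norm f" by (simp add: norm_mult)
    also have "\<dots> \<le> norm f" using w by (simp add: mult_left_le_one_le)
    finally show ?thesis .
  qed
  ultimately show ?thesis unfolding f_def by linarith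
qed

lemma ennreal_sub_le:
  fixes X :: ennreal and a b :: real
  assumes "ennreal a \<le> X + ennreal b" "0 \<le> b"
  shows "ennreal (a - b) \<le> X"
proof (cases X)
  case (real x)
  have x0: "0 \<le> x" using real by simp
  have "ennreal a \<le> ennreal (x + b)" using assms real x0 by (metis ennreal_plus)
  hence "a \<le> x + b" using x0 assms by (metis ennreal_le_iff add_nonneg_nonneg)
  hence "a - b \<le> x" by simp
  thus ?thesis using real by (simp add: ennreal_leI)
qed simp


lemma main_bound:
  fixes n :: nat and z :: "nat \<Rightarrow> complex" and \<alpha> :: "nat \<Rightarrow> real"
  assumes z: "\<forall>k<n. norm (z k) = 1" and a: "\<forall>k<n. \<alpha> k > 0" and n: "n > 0"
  defines "V \<equiv> unit_ball_vol (real DIM(complex))"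
  shows "ennreal (V / 324 * (\<Sum>k<n. (\<alpha> k)\<^sup>2) / (\<Sum>k<n. \<alpha> k))
     \<le> L1_norm_disc (cauchy_transform_discrete n z \<alpha>)"
proof -
  define A where "A = (\<Sum>k<n. \<alpha> k)"
  define f where "f = cauchy_transform_discrete n z \<alpha>"
  define r where "r k = \<alpha> k / (18 * A)" for k
  define c where "c k = complex_of_real (1 - 2 * r k) * z k" for k
  define B where "B k = ball (c k) (r k)" for k
  define U where "U = (\<Union>k<n. B k)"
  define \<beta> where "\<beta> k = \<alpha> k / (9 * r k)" for k
  have V0: "0 < V" unfolding V_def by simp
  have A0: "0 < A" unfolding A_def using a n by (intro sum_pos) auto
  have aA: "\<alpha> k \<le> A" if "k < n" for k
    unfolding A_def using a that by (intro member_le_sum) auto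
  have r0: "0 < r k" if "k < n" for k using a that A0 by (simp add: r_def)
  have r1: "r k \<le> 1/2" if "k < n" for k
    using aA[OF that] A0 by (simp add: r_def field_simps)
  have B_disc: "norm w < 1" if "k < n" "w \<in> B k" for k w
  proof -
    have e: "norm (complex_of_real (1 - 2 * r k)) = 1 - 2 * r k"
      using r1[OF that(1)] by (simp only: norm_of_real)
    have "norm w \<le> norm (c k) + norm (w - c k)"
      using norm_triangle_ineq[of "c k" "w - c k"] by simp
    moreover have "norm (c k) = 1 - 2 * r k" using z that unfolding c_def norm_mult e by simp
    moreover have "norm (w - c k) < r k" using that by (simp add: B_def dist_norm norm_minus_commute)
    ultimately show ?thesis using r0[OF that(1)] by linarith
  qed
  have U_disc: "U \<subseteq> ball 0 1" using B_disc by (auto simp: U_def)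
  have B_meas: "B k \<in> sets lborel" for k by (simp add: B_def)
  have U_meas: "U \<in> sets lborel" by (simp add: U_def B_def)
  have mB: "emeasure lborel (B k) = ennreal (V * (r k)\<^sup>2)" if "k < n" for k
    unfolding B_def V_def using r0[OF that] by (simp add: emeasure_ball)
  have pt: "(\<Sum>k<n. ennreal (\<beta> k * indicator (B k) w))
      \<le> ennreal (norm (f w)) * indicator U w + ennreal A * indicator U w" for w
  proof (cases "w \<in> U")
    case True
    hence w1: "norm w < 1" using U_disc by auto
    have "(\<Sum>k<n. \<beta> k * indicator (B k) w) \<le> (\<Sum>k<n. \<alpha> k * Re (z k / (z k - w)))"
    proof (rule sum_mono)
      fix k assume k: "k \<in> {..<n}"
      show "\<beta> k * indicator (B k) w \<le> \<alpha> k * Re (z k / (z k - w))"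
      proof (cases "w \<in> B k")
        case True
        have "1 / (9 * r k) \<le> Re (z k / (z k - w))"
          using g_big[of "z k" "r k" w] z k r0 r1 True by (auto simp: B_def c_def)
        hence "\<alpha> k * (1 / (9 * r k)) \<le> \<alpha> k * Re (z k / (z k - w))"
          using a k by (intro mult_left_mono) auto
        thus ?thesis using True by (simp add: \<beta>_def)
      next
        case False
        have "0 \<le> Re (z k / (z k - w))" using g_nonneg[of "z k" w] z k w1 by auto
        thus ?thesis using False a k by (simp add: less_imp_le)
      qed
    qed
    also have "\<dots> \<le> norm (f w) + A"
      unfolding f_def A_def by (rule key_ineq[OF z w1])
    finally have le: "(\<Sum>k<n. \<beta> k * indicator (B k) w) \<le> norm (f w) + A" .
    have "(\<Sum>k<n. ennreal (\<beta> k * indicator (B k) w)) = ennreal (\<Sum>k<n. \<beta> k * indicator (B k) w)"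
    proof (intro sum_ennreal)
      fix k assume "k \<in> {..<n}"
      hence "0 < \<alpha> k" "0 < r k" using a r0 by auto
      thus "0 \<le> \<beta> k * indicator (B k) w" by (simp add: \<beta>_def split: split_indicator)
    qed
    also have "\<dots> \<le> ennreal (norm (f w) + A)" using le by (rule ennreal_leI)
    also have "\<dots> = ennreal (norm (f w)) * indicator U w + ennreal A * indicator U w"
      using True A0 by (simp add: ennreal_plus)
    finally show ?thesis .
  next
    case False
    hence "\<And>k. k < n \<Longrightarrow> w \<notin> B k" by (auto simp: U_def)
    thus ?thesis by simp
  qed
  have fmeas: "(\<lambda>w. ennreal (norm (f w)) * indicator U w) \<in> borel_measurable lborel"
    using U_meas unfolding f_def cauchy_transform_discrete_def by measurable
  define X where "X = (\<integral>\<^sup>+ w. ennreal (norm (f w)) * indicator U w \<partial>lborel)"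
  have I1: "(\<integral>\<^sup>+ w. (\<Sum>k<n. ennreal (\<beta> k * indicator (B k) w)) \<partial>lborel)
      \<le> (\<integral>\<^sup>+ w. ennreal (norm (f w)) * indicator U w + ennreal A * indicator U w \<partial>lborel)"
    by (intro nn_integral_mono pt)
  have I2: "(\<integral>\<^sup>+ w. ennreal (norm (f w)) * indicator U w + ennreal A * indicator U w \<partial>lborel)
      = X + ennreal A * emeasure lborel U"
    using fmeas U_meas by (simp add: nn_integral_add nn_integral_cmult_indicator X_def)
  have I3: "emeasure lborel U \<le> (\<Sum>k<n. emeasure lborel (B k))"
    unfolding U_def using B_meas by (intro emeasure_subadditive_finite) auto
  have I4: "(\<Sum>k<n. emeasure lborel (B k)) = ennreal (\<Sum>k<n. V * (r k)\<^sup>2)"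
  proof -
    have "(\<Sum>k<n. emeasure lborel (B k)) = (\<Sum>k<n. ennreal (V * (r k)\<^sup>2))"
      by (rule sum.cong) (simp_all add: mB)
    also have "\<dots> = ennreal (\<Sum>k<n. V * (r k)\<^sup>2)"
      by (rule sum_ennreal) (simp add: V0 less_imp_le)
    finally show ?thesis .
  qed
  have I5: "(\<integral>\<^sup>+ w. (\<Sum>k<n. ennreal (\<beta> k * indicator (B k) w)) \<partial>lborel)
      = ennreal (\<Sum>k<n. \<beta> k * (V * (r k)\<^sup>2))"
  proof -
    have "(\<integral>\<^sup>+ w. (\<Sum>k<n. ennreal (\<beta> k * indicator (B k) w)) \<partial>lborel)
        = (\<Sum>k<n. (\<integral>\<^sup>+ w. ennreal (\<beta> k * indicator (B k) w) \<partial>lborel))"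
      by (intro nn_integral_sum measurable_compose[OF _ measurable_ennreal] borel_measurable_times borel_measurable_const borel_measurable_indicator) (simp add: B_def)
    also have "\<dots> = (\<Sum>k<n. ennreal (\<beta> k * (V * (r k)\<^sup>2)))"
    proof (rule sum.cong)
      fix k assume k: "k \<in> {..<n}"
      have b0: "0 \<le> \<beta> k" using a r0 k by (auto simp: \<beta>_def less_imp_le)
      have "(\<lambda>w. ennreal (\<beta> k * indicator (B k) w)) = (\<lambda>w. ennreal (\<beta> k) * indicator (B k) w)"
        by (rule ext) (simp split: split_indicator)
      hence "(\<integral>\<^sup>+ w. ennreal (\<beta> k * indicator (B k) w) \<partial>lborel) = ennreal (\<beta> k) * emeasure lborel (B k)"
        using B_meas by (simp add: nn_integral_cmult_indicator)
      also have "\<dots> = ennreal (\<beta> k * (V * (r k)\<^sup>2))"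
        using mB k b0 V0 by (simp add: ennreal_mult less_imp_le)
      finally show "(\<integral>\<^sup>+ w. ennreal (\<beta> k * indicator (B k) w) \<partial>lborel) = ennreal (\<beta> k * (V * (r k)\<^sup>2))" .
    qed simp
    also have "\<dots> = ennreal (\<Sum>k<n. \<beta> k * (V * (r k)\<^sup>2))"
    proof (rule sum_ennreal)
      fix k assume "k \<in> {..<n}"
      hence "0 < \<alpha> k" "0 < r k" using a r0 by auto
      thus "0 \<le> \<beta> k * (V * (r k)\<^sup>2)" using V0 by (simp add: \<beta>_def)
    qed
    finally show ?thesis .
  qed
  have I6: "ennreal A * emeasure lborel U \<le> ennreal (A * (\<Sum>k<n. V * (r k)\<^sup>2))"
  proof -
    have "ennreal A * emeasure lborel U \<le> ennreal A * ennreal (\<Sum>k<n. V * (r k)\<^sup>2)"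
      using I3 I4 by (intro mult_left_mono) auto
    also have "\<dots> = ennreal (A * (\<Sum>k<n. V * (r k)\<^sup>2))"
      using A0 by (simp add: ennreal_mult' less_imp_le)
    finally show ?thesis .
  qed
  have main: "ennreal (\<Sum>k<n. \<beta> k * (V * (r k)\<^sup>2))
      \<le> X + ennreal (A * (\<Sum>k<n. V * (r k)\<^sup>2))"
  proof -
    have "ennreal (\<Sum>k<n. \<beta> k * (V * (r k)\<^sup>2)) \<le> X + ennreal A * emeasure lborel U"
      using I1 unfolding I2 I5 .
    also have "\<dots> \<le> X + ennreal (A * (\<Sum>k<n. V * (r k)\<^sup>2))"
      by (rule add_left_mono[OF I6])
    finally show ?thesis .
  qed
  have "ennreal ((\<Sum>k<n. \<beta> k * (V * (r k)\<^sup>2)) - A * (\<Sum>k<n. V * (r k)\<^sup>2)) \<le> X"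
  proof -
    have "0 \<le> A * (\<Sum>k<n. V * (r k)\<^sup>2)"
      using A0 V0 by (intro mult_nonneg_nonneg sum_nonneg) auto
    thus ?thesis by (rule ennreal_sub_le[OF main])
  qed
  also have "(\<Sum>k<n. \<beta> k * (V * (r k)\<^sup>2)) - A * (\<Sum>k<n. V * (r k)\<^sup>2)
      = V / 324 * (\<Sum>k<n. (\<alpha> k)\<^sup>2) / A"
  proof -
    have "(\<Sum>k<n. \<beta> k * (V * (r k)\<^sup>2)) - A * (\<Sum>k<n. V * (r k)\<^sup>2)
        = (\<Sum>k<n. \<beta> k * (V * (r k)\<^sup>2) - A * (V * (r k)\<^sup>2))"
      by (simp add: sum_subtractf sum_distrib_left)
    also have "\<dots> = (\<Sum>k<n. V / 324 * (\<alpha> k)\<^sup>2 / A)"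
    proof (rule sum.cong)
      fix k assume k: "k \<in> {..<n}"
      have "\<alpha> k > 0" using a k by auto
      thus "\<beta> k * (V * (r k)\<^sup>2) - A * (V * (r k)\<^sup>2) = V / 324 * (\<alpha> k)\<^sup>2 / A"
        using A0 by (simp add: \<beta>_def r_def field_simps power2_eq_square)
    qed simp
    also have "\<dots> = V / 324 * (\<Sum>k<n. (\<alpha> k)\<^sup>2) / A"
      by (simp add: sum_divide_distrib sum_distrib_left)
    finally show ?thesis .
  qed
  also have "X \<le> L1_norm_disc (cauchy_transform_discrete n z \<alpha>)"
    unfolding X_def L1_norm_disc_def f_def
    using U_disc by (intro nn_integral_mono) (auto split: split_indicator)
  finally show ?thesis unfolding A_def .
qed

theorem theorem1p2:
  shows "\<exists>C::real. C > 0 \<and>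
    (\<forall>(n::nat) (z::nat \<Rightarrow> complex) (\<alpha>::nat \<Rightarrow> real).
       (\<forall>k<n. norm (z k) = 1) \<longrightarrow> (\<forall>k<n. \<alpha> k > 0) \<longrightarrow>
       L1_norm_disc (cauchy_transform_discrete n z \<alpha>)
         \<ge> ennreal (C * (\<Sum>k<n. (\<alpha> k)\<^sup>2) / (\<Sum>k<n. \<alpha> k)))"
proof (intro exI conjI allI impI)
  show "0 < unit_ball_vol (real DIM(complex)) / 324" by simp
  fix n :: nat and z :: "nat \<Rightarrow> complex" and \<alpha> :: "nat \<Rightarrow> real"
  assume z: "\<forall>k<n. norm (z k) = 1" and a: "\<forall>k<n. \<alpha> k > 0"
  show "ennreal (unit_ball_vol (real DIM(complex)) / 324 * (\<Sum>k<n. (\<alpha> k)\<^sup>2) / (\<Sum>k<n. \<alpha> k))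
      \<le> L1_norm_disc (cauchy_transform_discrete n z \<alpha>)"
  proof (cases "n = 0")
    case True thus ?thesis by simp
  next
    case False thus ?thesis using main_bound[OF z a] by simp
  qed
qed

end
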